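(* For every integer $n$, \[ \sum_{k=1}^n L_k^{\,4}=5F_{2n+1}F_{n-1}F_{n+2}+6n-5\,. \]
   Context: $F_i$ and $L_i$ denote the Fibonacci and Lucas numbers, defined for all $i\in\mathbb{Z}$ by $F_i=F_{i-1}+F_{i-2}$, $F_0=0$, $F_1=1$, and $L_i=L_{i-1}+L_{i-2}$, $L_0=2$, $L_1=1$; equivalently $F_{-i}=(-1)^{i-1}F_i$ and $L_{-i}=(-1)^iL_i$. Summation convention for an arbitrary integer upper limit: $\sum_{k=a}^{a-1} f(k)=0$, and for $n<a-1$, $\sum_{k=a}^{n} f(k) = -\sum_{k=n+1}^{a-1} f(k)$. *)

theory Defs
  imports Main
begin

fun fibn :: "nat \<Rightarrow> int" where
  "fibn 0 = 0"
| "fibn (Suc 0) = 1"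
| "fibn (Suc (Suc n)) = fibn (Suc n) + fibn n"

fun lucn :: "nat \<Rightarrow> int" where
  "lucn 0 = 2"
| "lucn (Suc 0) = 1"
| "lucn (Suc (Suc n)) = lucn (Suc n) + lucn n"

definition F :: "int \<Rightarrow> int" where
  "F i = (if i \<ge> 0 then fibn (nat i) else (-1) ^ (nat (-i) + 1) * fibn (nat (-i)))"

definition L :: "int \<Rightarrow> int" where
  "L i = (if i \<ge> 0 then lucn (nat i) else (-1) ^ nat (-i) * lucn (nat (-i)))"

text \<open>Summation with arbitrary integer upper limit:
  sum_{k=a}^{n} f k = usual sum if n >= a-1, and = - sum_{k=n+1}^{a-1} f k if n < a-1.\<close>
definition gsum :: "(int \<Rightarrow> int) \<Rightarrow> int \<Rightarrow> int \<Rightarrow> int" where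
  "gsum f a n = (if n \<ge> a - 1 then (\<Sum>k\<in>{a..n}. f k) else - (\<Sum>k\<in>{n+1..a-1}. f k))"

end

theory Submission
  imports Defs
begin

definition isrec :: "(int \<Rightarrow> int) \<Rightarrow> bool" where
  "isrec g = (\<forall>i. g (i+2) = g (i+1) + g i)"

lemma rec_zero:
  assumes "isrec g" "g 0 = 0" "g 1 = 0"
  shows "g n = 0"
proof -
  have r: "\<And>i. g (i+2) = g (i+1) + g i" using assms(1) unfolding isrec_def by blast
  have "g n = 0 \<and> g (n+1) = 0"
  proof (induct n rule: int_induct[where k=0])
    case base then show ?case using assms by simp
  next
    case (step1 i)
    then show ?case using r[of i] by (simp add: add.assoc)
  next
    case (step2 i)
    then show ?case using r[of "i-1"] by (simp add: algebra_simps)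
  qed
  then show ?thesis by simp
qed

lemma F_rec: "F (i+2) = F (i+1) + F i"
proof -
  consider "i \<ge> 0" | "i = -1" | "i = -2" | j where "i = - int j - 3"
  proof -
    have "i \<ge> 0 \<or> i = -1 \<or> i = -2 \<or> i = - int (nat (-i-3)) - 3" by auto
    then show ?thesis using that by blast
  qed
  then show ?thesis
  proof cases
    case 1
    then obtain m where m: "i = int m" by (metis nonneg_eq_int)
    have "F (i+2) = fibn (Suc (Suc m))" unfolding F_def m
      by (simp add: nat_add_distrib)
    moreover have "F (i+1) = fibn (Suc m)" unfolding F_def m by (simp add: nat_add_distrib)
    moreover have "F i = fibn m" unfolding F_def m by simp
    ultimately show ?thesis by simp
  next
    case 2 then show ?thesis by (simp add: F_def)
  next
    case 3 then show ?thesis by (simp add: F_def numeral_eq_Suc)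
  next
    case 4
    have a: "F (i+2) = (-1) ^ (j+2) * fibn (Suc j)" unfolding F_def 4
      by (simp add: nat_add_distrib)
    have b: "F (i+1) = (-1) ^ (j+3) * fibn (Suc (Suc j))" unfolding F_def 4
      by (simp add: nat_add_distrib numeral_eq_Suc)
    have c: "F i = (-1) ^ (j+4) * fibn (Suc (Suc (Suc j)))" unfolding F_def 4
      by (simp add: nat_add_distrib numeral_eq_Suc)
    show ?thesis unfolding a b c by (simp add: algebra_simps power_add)
  qed
qed

lemma L_rec: "L (i+2) = L (i+1) + L i"
proof -
  consider "i \<ge> 0" | "i = -1" | "i = -2" | j where "i = - int j - 3"
  proof -
    have "i \<ge> 0 \<or> i = -1 \<or> i = -2 \<or> i = - int (nat (-i-3)) - 3" by auto
    then show ?thesis using that by blast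
  qed
  then show ?thesis
  proof cases
    case 1
    then obtain m where m: "i = int m" by (metis nonneg_eq_int)
    have "L (i+2) = lucn (Suc (Suc m))" unfolding L_def m
      by (simp add: nat_add_distrib)
    moreover have "L (i+1) = lucn (Suc m)" unfolding L_def m by (simp add: nat_add_distrib)
    moreover have "L i = lucn m" unfolding L_def m by simp
    ultimately show ?thesis by simp
  next
    case 2 then show ?thesis by (simp add: L_def)
  next
    case 3 then show ?thesis by (simp add: L_def numeral_eq_Suc)
  next
    case 4
    have a: "L (i+2) = (-1) ^ (j+1) * lucn (Suc j)" unfolding L_def 4
      by (simp add: nat_add_distrib)
    have b: "L (i+1) = (-1) ^ (j+2) * lucn (Suc (Suc j))" unfolding L_def 4
      by (simp add: nat_add_distrib numeral_eq_Suc)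
    have c: "L i = (-1) ^ (j+3) * lucn (Suc (Suc (Suc j)))" unfolding L_def 4
      by (simp add: nat_add_distrib numeral_eq_Suc)
    show ?thesis unfolding a b c by (simp add: algebra_simps power_add)
  qed
qed

lemma F0: "F 0 = 0" and F1: "F 1 = 1" and Fm1: "F (-1) = 1"
  by (simp_all add: F_def)

lemma L_F: "L n = F (n-1) + F (n+1)"
proof -
  have "L n - (F (n-1) + F (n+1)) = 0"
    apply (rule rec_zero[where g="\<lambda>n. L n - (F (n-1) + F (n+1))"])
    unfolding isrec_def
    using L_rec F_rec
      apply (auto simp: algebra_simps)
    subgoal for i using F_rec[of "i - 1"] F_rec[of "i+1"] L_rec[of i]
      by (simp add: algebra_simps)
     apply (simp add: L_def F_def)
    apply (simp add: L_def F_def numeral_eq_Suc)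
    done
  then show ?thesis by simp
qed

lemma F_add: "F (n+k) = F k * F (n+1) + F (k-1) * F n"
proof -
  have "F (n+k) - (F k * F (n+1) + F (k-1) * F n) = 0"
    apply (rule rec_zero[where g="\<lambda>n. F (n+k) - (F k * F (n+1) + F (k-1) * F n)"])
    unfolding isrec_def
    subgoal
    proof
      fix i
      show "F (i + 2 + k) - (F k * F (i + 2 + 1) + F (k - 1) * F (i + 2)) =
        F (i + 1 + k) - (F k * F (i + 1 + 1) + F (k - 1) * F (i + 1)) +
        (F (i + k) - (F k * F (i + 1) + F (k - 1) * F i))"
        using F_rec[of "i+k"] F_rec[of "i+1"] F_rec[of i]
        by (simp add: algebra_simps)
    qed
    subgoal by (simp add: F0 F1)
    subgoal using F_rec[of "k-1"] F_rec[of 0] by (simp add: F0 F1 algebra_simps)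
    done
  then show ?thesis by simp
qed

lemma cassini: "(F (n+1)^2 - F (n+1) * F n - F n ^ 2)^2 = 1"
proof -
  define C where "C n = (F (n+1)^2 - F (n+1) * F n - F n ^ 2)^2" for n
  have st: "C (i+1) = C i" for i
    unfolding C_def using F_rec[of i] by (simp add: algebra_simps power2_eq_square)
  have "C n = C 0"
  proof (induct n rule: int_induct[where k=0])
    case base then show ?case by simp
  next
    case (step1 i) then show ?case using st[of i] by simp
  next
    case (step2 i) then show ?case using st[of "i-1"] by simp
  qed
  then show ?thesis by (simp add: C_def F0 F1)
qed

lemma gsum_step: "gsum f 1 n - gsum f 1 (n-1) = f n"
proof (cases "n \<ge> 1")
  case True
  have "{1..n} = insert n {1..n-1}" using True by auto
  then show ?thesis using True by (simp add: gsum_def)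
next
  case False
  show ?thesis
  proof (cases "n = 0")
    case True then show ?thesis by (simp add: gsum_def)
  next
    case False2: False
    have "{n..0} = insert n {n+1..0}" using False False2 by auto
    then show ?thesis using False False2 by (simp add: gsum_def)
  qed
qed

theorem corollary2:
  fixes n :: int
  shows "gsum (\<lambda>k. L k ^ 4) 1 n = 5 * F (2*n+1) * F (n-1) * F (n+2) + 6*n - 5"
proof -
  define R where "R n = 5 * F (2*n+1) * F (n-1) * F (n+2) + 6*n - 5" for n
  define S where "S n = gsum (\<lambda>k. L k ^ 4) 1 n" for n
  have rstep: "R n - R (n-1) = L n ^ 4" for n
  proof -
    define a where "a = F n"
    define b where "b = F (n+1)"
    have q: "(b^2 - b*a - a^2)^2 = 1" using cassini[of n] by (simp add: a_def b_def)
    have f1: "F (n-1) = b - a" using F_rec[of "n-1"] by (simp add: a_def b_def algebra_simps)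
    have f2: "F (n+2) = a + b" using F_rec[of n] by (simp add: a_def b_def)
    have f3: "F (n-2) = 2*a - b" using F_rec[of "n-2"] f1 by (simp add: a_def)
    have f4: "F (2*n+1) = a^2 + b^2" using F_add[of n "n+1"]
      by (simp add: a_def b_def algebra_simps power2_eq_square)
    have f5: "F (2*n-1) = a^2 + (b-a)^2" using F_add[of "n-1" n] f1
      by (simp add: a_def b_def algebra_simps power2_eq_square)
    have l: "L n = 2*b - a" using L_F[of n] f1 by (simp add: b_def)
    have e: "R n - R (n-1) = 5*(a^2+b^2)*(b-a)*(a+b) - 5*(a^2+(b-a)^2)*(2*a-b)*b + 6"
    proof -
      have x: "2*(n-1)+1 = 2*n-1" "n-1-1 = n-2" "n-1+2=n+1" by simp_all
      have "R n - R (n-1) = 5*F(2*n+1)*F(n-1)*F(n+2) - 5*F(2*n-1)*F(n-2)*F(n+1) + 6"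
        unfolding R_def x by simp
      also have "... = 5*(a^2+b^2)*(b-a)*(a+b) - 5*(a^2+(b-a)^2)*(2*a-b)*b + 6"
        unfolding f1 f2 f3 f4 f5 b_def[symmetric] by simp
      finally show ?thesis .
    qed
    have "5*(a^2+b^2)*(b-a)*(a+b) - 5*(a^2+(b-a)^2)*(2*a-b)*b + 6 - (2*b-a)^4
          = 6 - 6*(b^2 - b*a - a^2)^2"
      by (simp add: algebra_simps power2_eq_square power4_eq_xxxx)
    then show ?thesis using e l q by simp
  qed
  have "S n = R n"
  proof (induct n rule: int_induct[where k=0])
    case base then show ?case by (simp add: S_def R_def gsum_def F_def numeral_eq_Suc)
  next
    case (step1 i)
    then show ?case using rstep[of "i+1"] gsum_step[of "\<lambda>k. L k ^ 4" "i+1"]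
      by (simp add: S_def)
  next
    case (step2 i)
    then show ?case using rstep[of "i"] gsum_step[of "\<lambda>k. L k ^ 4" "i"]
      by (simp add: S_def)
  qed
  then show ?thesis by (simp add: S_def R_def)
qed

end
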